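(* Let $p$ be a prime, let $U$ be an open subgroup of $S$, and let $H\neq\{t\}$ be a closed normal subgroup of $U$. Then $H$ is infinite, and $H$ contains elements of arbitrarily large depth: for every $N\ge1$ there is $h\in H$ with $h\neq t$ and $h\equiv t\pmod{t^N}$.
   Context: $S$ denotes the group, under substitution $(f\circ g)(t)=f(g(t))$, of all power series $t+\sum_{k\ge1}(a_{pk}t^{pk}+a_{pk+1}t^{pk+1})$ with coefficients in $\mathbb F_p$; it is a pro-$p$ group with the topology in which the subgroups $\{f\in S: f\equiv t\bmod t^n\}$ form a base of open neighbourhoods of the identity $t$. *)

theory Defs
  imports "HOL-Algebra.Coset" "HOL-Computational_Algebra.Formal_Power_Series"
begin

text \<open>The base field F_p is modelled as a finite field type 'a with CARD('a) = p
  (p prime); every such field is (isomorphic to) F_p.\<close>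

definition S_set :: "nat \<Rightarrow> ('a::field) fps set" where
  "S_set p = {f. fps_nth f 0 = 0 \<and> fps_nth f 1 = 1 \<and>
      (\<forall>n\<ge>2. fps_nth f n \<noteq> 0 \<longrightarrow> p \<le> n \<and> (n mod p = 0 \<or> n mod p = 1))}"

definition S_grp :: "nat \<Rightarrow> ('a::field) fps monoid" where
  "S_grp p = \<lparr>carrier = S_set p, monoid.mult = (\<lambda>f g. f oo g), one = fps_X\<rparr>"

definition cong_mod_tpow :: "('a::field) fps \<Rightarrow> 'a fps \<Rightarrow> nat \<Rightarrow> bool" where
  "cong_mod_tpow f g n \<longleftrightarrow> (\<forall>i<n. fps_nth f i = fps_nth g i)"

definition S_nbhd :: "nat \<Rightarrow> nat \<Rightarrow> ('a::field) fps set" where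
  "S_nbhd p n = {f \<in> S_set p. cong_mod_tpow f fps_X n}"

text \<open>An open subgroup of S: a subgroup containing some basic open neighbourhood of t
  (a subgroup of a topological group is open iff it contains a neighbourhood of 1).\<close>
definition open_subgroup_S :: "nat \<Rightarrow> ('a::field) fps set \<Rightarrow> bool" where
  "open_subgroup_S p U \<longleftrightarrow> subgroup U (S_grp p) \<and> (\<exists>n. S_nbhd p n \<subseteq> U)"

text \<open>The basic neighbourhoods of f in S are
  f o S_nbhd p n = {g in S. g = f mod t^n}; so A is closed iff every f in S
  approximated modulo every power t^n by elements of A lies in A.\<close>
definition closed_in_S :: "nat \<Rightarrow> ('a::field) fps set \<Rightarrow> bool" where
  "closed_in_S p A \<longleftrightarrow> A \<subseteq> S_set p \<and>
     (\<forall>f \<in> S_set p. (\<forall>n. \<exists>h\<in>A. cong_mod_tpow h f n) \<longrightarrow> f \<in> A)"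

end

theory Submission
  imports Defs
begin


lemma pow_cong_lt:
  fixes a b :: "'a::comm_ring_1 fps"
  assumes "\<forall>i<K. fps_nth a i = fps_nth b i"
  shows "\<forall>i<K. fps_nth (a^j) i = fps_nth (b^j) i"
proof (induction j)
  case 0 then show ?case by simp
next
  case (Suc j)
  show ?case
  proof (intro allI impI)
    fix i assume i: "i < K"
    have "fps_nth (a^Suc j) i = (\<Sum>l=0..i. fps_nth a l * fps_nth (a^j) (i-l))" by (simp add: fps_mult_nth)
    also have "\<dots> = (\<Sum>l=0..i. fps_nth b l * fps_nth (b^j) (i-l))"
      using i assms Suc.IH by (intro sum.cong) auto
    also have "\<dots> = fps_nth (b^Suc j) i" by (simp add: fps_mult_nth)
    finally show "fps_nth (a^Suc j) i = fps_nth (b^Suc j) i" .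
  qed
qed

lemma compose_cong_lt:
  fixes a b k :: "'a::comm_ring_1 fps"
  assumes "\<forall>i<K. fps_nth a i = fps_nth b i"
  shows "\<forall>i<K. fps_nth (k oo a) i = fps_nth (k oo b) i"
  using pow_cong_lt[OF assms] by (auto simp: fps_compose_nth intro!: sum.cong)

lemma binom_aux:
  fixes Y :: "'a::comm_ring_1 fps"
  shows "\<exists>s. (1 + Y)^m = 1 + of_nat m * Y + Y^2 * s"
proof (induction m)
  case 0 then show ?case by (intro exI[of _ 0]) simp
next
  case (Suc m)
  then obtain s where s: "(1 + Y)^m = 1 + of_nat m * Y + Y^2 * s" by blast
  show ?case
    by (intro exI[of _ "of_nat m + s + s * Y"]) (simp add: s algebra_simps power2_eq_square)
qed

lemma zeros_below:
  fixes f :: "'a::comm_ring_1 fps"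
  assumes "\<forall>i<k. fps_nth f i = 0"
  shows "f = fps_X^k * fps_shift k f"
  by (rule fps_ext) (simp add: fps_X_power_mult_nth assms)

lemma of_nat_card_zero: "(of_nat (card (UNIV::'a set)) :: 'a::{finite,comm_ring_1}) = 0"
proof -
  have "(\<Sum>y\<in>UNIV. y) = (\<Sum>y\<in>UNIV. y + (1::'a))"
    by (rule sum.reindex_bij_witness[of _ "\<lambda>y. y + 1" "\<lambda>y. y - 1"]) auto
  also have "\<dots> = (\<Sum>y\<in>UNIV. y) + of_nat (card (UNIV::'a set))"
    by (simp add: sum.distrib)
  finally show ?thesis by simp
qed

lemma ring_id:
  fixes X A B q s1 s2 r1 :: "'a::comm_ring_1"
  shows "(X + X*X*B) + (X*X*A) * (1 + of_nat m * (X*B) + (X*B)^2 * s1) * (q + X*X*B * r1)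
     - (X + X*X*A*q) - (X*X*B) * (1 + of_nat n * (X*A*q) + (X*A*q)^2 * s2)
   = X*X*X*A*B * ((of_nat m - of_nat n) * q + X*B*s1*q
       + X*(1 + of_nat m*(X*B) + (X*B)^2*s1)*r1 - X*A*q*q*s2)"
  by (simp add: algebra_simps power2_eq_square)

lemma comm_diff:
  fixes h :: "'a::field fps"
  assumes h0: "fps_nth h 0 = 0" and h1: "fps_nth h 1 = 1"
    and hz: "\<forall>i. 2 \<le> i \<and> i < m \<longrightarrow> fps_nth h i = 0"
    and m2: "m \<ge> 2" and n2: "n \<ge> 2"
  defines "g \<equiv> fps_X + fps_X^n"
  shows "\<forall>i < m+n-1. fps_nth (h oo g) i = fps_nth (g oo h) i"
    and "fps_nth (h oo g) (m+n-1) - fps_nth (g oo h) (m+n-1) = (of_nat m - of_nat n) * fps_nth h m"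
proof -
  obtain m' n' where mm: "m = Suc (Suc m')" and nn: "n = Suc (Suc n')"
    using m2 n2 by (metis add_2_eq_Suc le_Suc_ex)
  define X :: "'a fps" where "X = fps_X"
  define A where "A = X^m'"
  define B where "B = X^n'"
  have Xm: "X^m = X*X*A" by (simp add: A_def mm)
  have Xn: "X^n = X*X*B" by (simp add: B_def nn)
  have Xm1: "X^(m-1) = X*A" by (simp add: A_def mm)
  have Xn1: "X^(n-1) = X*B" by (simp add: B_def nn)
  have Xmn: "X^(m+n-1) = X*X*X*A*B" by (simp add: A_def B_def mm nn power_add)
  define q where "q = fps_shift m h"
  have "h - fps_X = fps_X^m * fps_shift m (h - fps_X)"
  proof (rule zeros_below, intro allI impI)
    fix i assume "i < m"
    then show "fps_nth (h - fps_X) i = 0"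
      using h0 h1 hz by (cases "i = 0"; cases "i = 1") auto
  qed
  moreover have "fps_shift m (h - fps_X) = q"
    unfolding q_def using m2 by (intro fps_ext) simp
  ultimately have h_eq: "h = X + X^m * q" unfolding X_def by (simp add: algebra_simps)
  have g0: "fps_nth g 0 = 0" unfolding g_def using n2 by simp
  have goh: "g oo h = h + h^n"
    unfolding g_def using h0 fps_compose_power[OF h0, of fps_X n]
    by (simp add: fps_compose_add_distrib)
  have "(X^m * q) oo g = (X oo g)^m * (q oo g)"
    using fps_compose_power[OF g0, of fps_X m] fps_compose_mult_distrib[OF g0]
    by (simp add: X_def)
  hence hog: "h oo g = g + g^m * (q oo g)"
    by (subst h_eq, simp add: fps_compose_add_distrib X_def g0)
  have "\<forall>i<n. fps_nth g i = fps_nth fps_X i"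
    unfolding g_def by auto
  hence "\<forall>i<n. fps_nth (q oo g) i = fps_nth (q oo fps_X) i"
    by (rule compose_cong_lt)
  hence "\<forall>i<n. fps_nth ((q oo g) - q) i = 0" by (simp add: fps_sub_nth)
  hence "(q oo g) - q = fps_X^n * fps_shift n ((q oo g) - q)" by (rule zeros_below)
  then obtain r1 where qog: "q oo g = q + X^n * r1" unfolding X_def
    by (metis add.commute diff_add_cancel)
  obtain s1 where s1: "(1 + X^(n-1))^m = 1 + of_nat m * X^(n-1) + (X^(n-1))^2 * s1"
    using binom_aux by blast
  have "g^m = (X * (1 + X^(n-1)))^m"
    unfolding g_def X_def using nn by (simp add: algebra_simps)
  hence gm: "g^m = X^m * (1 + of_nat m * X^(n-1) + (X^(n-1))^2 * s1)"
    by (simp only: power_mult_distrib s1)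
  obtain s2 where s2: "(1 + X^(m-1)*q)^n = 1 + of_nat n * (X^(m-1)*q) + (X^(m-1)*q)^2 * s2"
    using binom_aux by blast
  have "h^n = (X * (1 + X^(m-1)*q))^n"
    unfolding h_eq using mm by (simp add: algebra_simps)
  hence hn: "h^n = X^n * (1 + of_nat n * (X^(m-1)*q) + (X^(m-1)*q)^2 * s2)"
    by (simp only: power_mult_distrib s2)
  define F where "F = (of_nat m - of_nat n) * q + X*B*s1*q
       + X*(1 + of_nat m*(X*B) + (X*B)^2*s1)*r1 - X*A*q*q*s2"
  have g_X: "g = X + X*X*B" unfolding g_def X_def using Xn X_def by simp
  have h_X: "h = X + X*X*A*q" using h_eq Xm by simp
  have "(h oo g) - (g oo h) = g + g^m * (q oo g) - (h + h^n)" by (simp add: hog goh)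
  also have "\<dots> = (X + X*X*B) + (X*X*A) * (1 + of_nat m * (X*B) + (X*B)^2 * s1) * (q + X*X*B * r1)
     - (X + X*X*A*q) - (X*X*B) * (1 + of_nat n * (X*A*q) + (X*A*q)^2 * s2)"
    unfolding qog gm hn Xm Xn Xm1 Xn1 by (subst g_X, subst h_X) (simp add: algebra_simps)
  also have "\<dots> = X^(m+n-1) * F"
    unfolding Xmn F_def by (rule ring_id)
  finally have E: "(h oo g) - (g oo h) = X^(m+n-1) * F" .
  have F0: "fps_nth F 0 = (of_nat m - of_nat n) * fps_nth h m"
    by (simp add: F_def X_def q_def)
  show "\<forall>i < m+n-1. fps_nth (h oo g) i = fps_nth (g oo h) i"
  proof (intro allI impI)
    fix i assume "i < m+n-1"
    hence "fps_nth ((h oo g) - (g oo h)) i = 0" unfolding E X_def by (simp add: fps_X_power_mult_nth)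
    thus "fps_nth (h oo g) i = fps_nth (g oo h) i" by (simp add: fps_sub_nth)
  qed
  have "fps_nth ((h oo g) - (g oo h)) (m+n-1) = fps_nth F 0" unfolding E X_def by (simp add: fps_X_power_mult_nth)
  thus "fps_nth (h oo g) (m+n-1) - fps_nth (g oo h) (m+n-1) = (of_nat m - of_nat n) * fps_nth h m"
    using F0 by (simp add: fps_sub_nth)
qed


lemma depth_lemma:
  fixes p :: nat and U H :: "('a::{field,finite}) fps set"
  assumes card: "card (UNIV :: 'a set) = p"
    and opn: "open_subgroup_S p U"
    and nrm: "normal H ((S_grp p)\<lparr>carrier := U\<rparr>)"
    and hH: "h \<in> H" and hX: "h \<noteq> fps_X" and N1: "N \<ge> 1"
  shows "\<exists>c\<in>H. c \<noteq> fps_X \<and> cong_mod_tpow c fps_X N"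
proof -
  define G where "G = (S_grp p)\<lparr>carrier := U\<rparr>"
  interpret N: normal H G using nrm G_def by simp
  have carG: "carrier G = U" by (simp add: G_def)
  have mulG: "\<And>x y. x \<otimes>\<^bsub>G\<^esub> y = x oo y" by (simp add: G_def S_grp_def)
  have oneG: "\<one>\<^bsub>G\<^esub> = fps_X" by (simp add: G_def S_grp_def)
  have subU: "subgroup U (S_grp p)" and "\<exists>n. S_nbhd p n \<subseteq> U"
    using opn by (auto simp: open_subgroup_S_def)
  then obtain N0 where N0: "S_nbhd p N0 \<subseteq> U" by blast
  have US: "U \<subseteq> S_set p" using subgroup.subset[OF subU] by (simp add: S_grp_def)
  have HU: "H \<subseteq> U" using N.subset carG by simp
  have p0: "(of_nat p :: 'a) = 0" using of_nat_card_zero[where 'a='a] card by simp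
  have p2: "p \<ge> 2"
  proof (rule ccontr)
    assume "\<not> p \<ge> 2"
    then have "p = 0 \<or> p = 1" by auto
    moreover have "(0::'a) \<noteq> 1" by simp
    then have "card (UNIV :: 'a set) \<ge> 2"
      using card_mono[of UNIV "{0::'a, 1}"] by auto
    ultimately show False using card by auto
  qed
  have hS: "h \<in> S_set p" using hH HU US by auto
  hence h0: "fps_nth h 0 = 0" and h1: "fps_nth h 1 = 1"
    and hS': "\<forall>n\<ge>2. fps_nth h n \<noteq> 0 \<longrightarrow> p \<le> n \<and> (n mod p = 0 \<or> n mod p = 1)"
    by (auto simp: S_set_def)
  have ex: "\<exists>i. 2 \<le> i \<and> fps_nth h i \<noteq> 0"
  proof (rule ccontr)
    assume "\<not> ?thesis"
    hence "h = fps_X" using h0 h1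
      by (intro fps_ext) (metis One_nat_def fps_X_nth less_2_cases_iff not_le)
    thus False using hX by simp
  qed
  define m where "m = (LEAST i. 2 \<le> i \<and> fps_nth h i \<noteq> 0)"
  have m2: "2 \<le> m" and hm: "fps_nth h m \<noteq> 0"
    using LeastI_ex[OF ex] unfolding m_def by auto
  have hz: "\<forall>i. 2 \<le> i \<and> i < m \<longrightarrow> fps_nth h i = 0"
    using not_less_Least unfolding m_def by blast
  have mp: "m mod p = 0 \<or> m mod p = 1" using hS' m2 hm by auto
  define r where "r = (if m mod p = 0 then 1 else 0::nat)"
  define n where "n = p * (N + N0 + 2) + r"
  have "n mod p = r mod p" unfolding n_def
    by (metis add.commute mod_mult_self2)
  hence nmod: "n mod p = r" unfolding r_def using p2 by auto
  have n_ge: "n \<ge> p * (N + N0 + 2)" unfolding n_def by simp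
  have "p * (N + N0 + 2) \<ge> 2 * (N + N0 + 2)" using p2 by (rule mult_right_mono) simp
  hence n2: "n \<ge> 2" and nN: "n \<ge> N" and nN0: "n \<ge> N0" and np: "n \<ge> p" using n_ge p2
    by (auto intro: order_trans[of _ "2 * (N + N0 + 2)"])
  have ofmod: "(of_nat k :: 'a) = of_nat (k mod p)" for k
  proof -
    have "(of_nat k :: 'a) = of_nat (p * (k div p) + k mod p)" by simp
    also have "\<dots> = of_nat (k mod p)" using p0 by (simp only: of_nat_add of_nat_mult) simp
    finally show ?thesis .
  qed
  have mn: "(of_nat m :: 'a) \<noteq> of_nat n"
    using mp by (subst (1 2) ofmod) (auto simp: nmod r_def)
  define g :: "'a fps" where "g = fps_X + fps_X^n"
  have gS: "g \<in> S_set p"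
    unfolding S_set_def g_def using n2 np nmod r_def by auto
  have "g \<in> S_nbhd p N0"
    unfolding S_nbhd_def cong_mod_tpow_def using gS nN0 by (auto simp: g_def)
  hence gU: "g \<in> carrier G" using N0 carG by auto
  have hG: "h \<in> carrier G" using hH HU carG by auto
  note cd = comm_diff[OF h0 h1 hz m2 n2, folded g_def]
  have diff: "fps_nth (h oo g) (m+n-1) \<noteq> fps_nth (g oo h) (m+n-1)"
    using cd(2) mn hm by auto
  define c where "c = inv\<^bsub>G\<^esub> h \<otimes>\<^bsub>G\<^esub> (inv\<^bsub>G\<^esub> g \<otimes>\<^bsub>G\<^esub> h \<otimes>\<^bsub>G\<^esub> g)"
  have cH: "c \<in> H" unfolding c_def
    using N.inv_op_closed1[OF gU hH] hH
    by (simp add: N.subgroup_axioms subgroup.m_closed subgroup.m_inv_closed)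
  have c_eq: "c = inv\<^bsub>G\<^esub> (g \<otimes>\<^bsub>G\<^esub> h) \<otimes>\<^bsub>G\<^esub> (h \<otimes>\<^bsub>G\<^esub> g)"
    unfolding c_def using gU hG by (simp add: N.inv_mult_group N.m_assoc)
  have "c \<noteq> fps_X"
  proof
    assume "c = fps_X"
    hence "inv\<^bsub>G\<^esub> (g \<otimes>\<^bsub>G\<^esub> h) \<otimes>\<^bsub>G\<^esub> (h \<otimes>\<^bsub>G\<^esub> g) = \<one>\<^bsub>G\<^esub>" using c_eq oneG by simp
    hence "h \<otimes>\<^bsub>G\<^esub> g = g \<otimes>\<^bsub>G\<^esub> h" using gU hG
      by (metis N.inv_equality N.inv_inv N.m_closed N.inv_closed)
    thus False using diff mulG by simp
  qed
  moreover have "cong_mod_tpow c fps_X N"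
  proof -
    let ?k = "inv\<^bsub>G\<^esub> (g \<otimes>\<^bsub>G\<^esub> h)"
    have "\<forall>i<m+n-1. fps_nth (?k oo (h oo g)) i = fps_nth (?k oo (g oo h)) i"
      by (rule compose_cong_lt) (use cd(1) in simp)
    moreover have "?k oo (g oo h) = fps_X"
      using N.l_inv[OF N.m_closed[OF gU hG]] mulG oneG by simp
    moreover have "c = ?k oo (h oo g)" using c_eq mulG by simp
    ultimately show ?thesis unfolding cong_mod_tpow_def using nN m2 by auto
  qed
  ultimately show ?thesis using cH by blast
qed


theorem proposition5p6:
  fixes p :: nat and U H :: "('a::{field,finite}) fps set"
  assumes "prime p" and "card (UNIV :: 'a set) = p"
    and "open_subgroup_S p U"
    and "closed_in_S p H"
    and "normal H ((S_grp p)\<lparr>carrier := U\<rparr>)"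
    and "H \<noteq> {fps_X}"
  shows "infinite H \<and>
         (\<forall>N\<ge>1. \<exists>h\<in>H. h \<noteq> fps_X \<and> cong_mod_tpow h fps_X N)"
proof -
  have "fps_X \<in> H"
    using normal.axioms(1)[OF assms(5)] subgroup.one_closed by (fastforce simp: S_grp_def)
  then obtain h where hH: "h \<in> H" and hX: "h \<noteq> fps_X" using assms(6) by blast
  have D: "\<forall>N\<ge>1. \<exists>h\<in>H. h \<noteq> fps_X \<and> cong_mod_tpow h fps_X N"
    using depth_lemma[OF assms(2,3,5) hH hX] by blast
  have "infinite H"
  proof
    assume fin: "finite H"
    define f where "f = (\<lambda>c::'a fps. SOME i. fps_nth c i \<noteq> fps_nth fps_X i)"
    have fne: "fps_nth c (f c) \<noteq> fps_nth fps_X (f c)" if "c \<noteq> fps_X" for c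
    proof -
      have "\<exists>i. fps_nth c i \<noteq> fps_nth fps_X i" using that fps_ext by blast
      thus ?thesis unfolding f_def by (rule someI_ex)
    qed
    define M where "M = Suc (Max (f ` (H - {fps_X})))"
    obtain c where c: "c \<in> H" "c \<noteq> fps_X" "cong_mod_tpow c fps_X M"
      using D M_def by auto
    have "f c \<le> Max (f ` (H - {fps_X}))" using fin c by (intro Max_ge) auto
    hence "f c < M" unfolding M_def by simp
    thus False using c fne[OF c(2)] unfolding cong_mod_tpow_def by blast
  qed
  with D show ?thesis by blast
qed

end
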